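(* Let $Y$ be a mean zero random variable with variance $\sigma^2\in(0,\infty)$ and moment generating function $m(s)=\mathbb{E}[e^{sY}]$, and let $Y^*$, defined on the same probability space, have the $Y$-zero biased distribution. If $|Y^*-Y|\le c$ almost surely for some $c>0$ and $m(s)$ is finite for all $s\in[0,2/c)$, then for every $\theta\in(0,2/c)$, $$m(\theta)\le \exp\left(\frac{5\sigma^2\theta^2}{6(1-c\theta/2)}\right).$$
   Context: Zero bias distribution: for a mean zero random variable $Y$ with finite positive variance $\sigma^2$, a random variable $Y^*$ is said to have the $Y$-zero biased distribution if $\mathbb{E}[Yf(Y)]=\sigma^2\mathbb{E}[f'(Y^* )]$ for all absolutely continuous functions $f$ for which the expectation of either side exists. *)

theory Defs
  imports "HOL-Probability.Probability"
begin

text \<open>f is (locally) absolutely continuous on the real line with (a.e.) derivative g: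
  g is Lebesgue integrable on every compact interval and f is an indefinite integral of g.\<close>
definition abs_cont_deriv :: "(real \<Rightarrow> real) \<Rightarrow> (real \<Rightarrow> real) \<Rightarrow> bool" where
  "abs_cont_deriv f g \<longleftrightarrow>
     (\<forall>a b. set_integrable lborel {a..b} g) \<and>
     (\<forall>a b. a \<le> b \<longrightarrow> f b - f a = (LINT x:{a..b}|lborel. g x))"

definition zero_biased :: "'a measure \<Rightarrow> ('a \<Rightarrow> real) \<Rightarrow> ('a \<Rightarrow> real) \<Rightarrow> bool" where
  "zero_biased M Y Ystar \<longleftrightarrow>
     (\<forall>f g. abs_cont_deriv f g \<longrightarrow>
        integrable M (\<lambda>x. Y x * f (Y x)) \<longrightarrow> integrable M (\<lambda>x. g (Ystar x)) \<longrightarrow>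
        (\<integral>x. Y x * f (Y x) \<partial>M) = (\<integral>x. (Y x)\<^sup>2 \<partial>M) * (\<integral>x. g (Ystar x) \<partial>M))"

end

theory Submission
  imports Defs
begin

lemma exp_diff_le: "exp u - exp v \<le> (u - v) * exp (u::real)"
proof -
  have "1 + (v - u) \<le> exp (v - u)" by (rule exp_ge_add_one_self)
  hence "exp u * (1 + (v - u)) \<le> exp u * exp (v - u)" by simp
  also have "exp u * exp (v - u) = exp v" by (simp add: exp_add[symmetric])
  finally show ?thesis by (simp add: algebra_simps)
qed

lemma tanh_aux: assumes "0 \<le> (d::real)" shows "exp d - 1 \<le> d * (exp d + 1) / 2"
proof -
  let ?h = "\<lambda>d. d * (exp d + 1) / 2 - exp d + 1"
  have "?h 0 \<le> ?h d"
  proof (rule DERIV_nonneg_imp_nondecreasing[OF assms])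
    fix x :: real
    have D: "DERIV ?h x :> ((exp x + 1)/2 + x * exp x / 2 - exp x)"
      by (auto intro!: derivative_eq_intros simp: algebra_simps)
    have "1 - x \<le> exp (-x)" using exp_ge_add_one_self[of "-x"] by simp
    hence "exp x * (1 - x) \<le> exp x * exp (-x)" by simp
    hence "exp x * (1 - x) \<le> 1" by (simp add: exp_minus)
    hence "(exp x + 1)/2 + x * exp x / 2 - exp x \<ge> 0" by (simp add: field_simps)
    with D show "\<exists>y. DERIV ?h x :> y \<and> 0 \<le> y" by blast
  qed
  thus ?thesis by simp
qed

lemma trap: "\<bar>exp (u::real) - exp v\<bar> \<le> \<bar>u - v\<bar> * (exp u + exp v) / 2"
proof -
  have *: "exp a - exp b \<le> (a - b) * (exp a + exp b) / 2" if "b \<le> a" for a b :: real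
  proof -
    have "exp (a - b) - 1 \<le> (a - b) * (exp (a - b) + 1) / 2" using tanh_aux that by simp
    hence "exp b * (exp (a - b) - 1) \<le> exp b * ((a - b) * (exp (a - b) + 1) / 2)" by simp
    moreover have "exp b * exp (a - b) = exp a" by (simp add: exp_add[symmetric])
    ultimately show ?thesis by (simp add: algebra_simps)
  qed
  show ?thesis
  proof (cases "v \<le> u")
    case True thus ?thesis using *[of v u, OF True] by (simp add: abs_of_nonneg)
  next
    case False thus ?thesis using *[of u v] by (simp add: abs_if algebra_simps)
  qed
qed

lemma key_bound:
  fixes y s t b b' :: real
  assumes "0 \<le> s" "s \<le> b" "0 \<le> t" "t \<le> b" "b < b'"
  shows "\<bar>exp (t*y) - exp (s*y)\<bar> \<le> \<bar>t - s\<bar> * (\<bar>y\<bar> + exp (b'*y) / (b' - b))"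
proof -
  have gen: "\<bar>exp u - exp v\<bar> \<le> \<bar>u - v\<bar> * max (exp u) (exp v)" for u v :: real
  proof (cases "v \<le> u")
    case True thus ?thesis using exp_diff_le[of u v] by (simp add: abs_of_nonneg)
  next
    case False thus ?thesis using exp_diff_le[of v u] by (simp add: abs_if algebra_simps max_def)
  qed
  have M: "\<bar>y\<bar> * max (exp (t*y)) (exp (s*y)) \<le> \<bar>y\<bar> + exp (b'*y) / (b' - b)"
  proof (cases "y \<ge> 0")
    case True
    have "max (exp (t*y)) (exp (s*y)) \<le> exp (b*y)"
      using assms True by (auto intro: mult_right_mono)
    hence "\<bar>y\<bar> * max (exp (t*y)) (exp (s*y)) \<le> y * exp (b*y)" using True
      by (simp add: mult_left_mono)
    also have "y * exp (b*y) \<le> exp (b'*y) / (b' - b)"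
    proof -
      have "(b'-b)*y \<le> exp ((b'-b)*y)" using exp_ge_add_one_self[of "(b'-b)*y"] by linarith
      hence "(b'-b)*y * exp (b*y) \<le> exp ((b'-b)*y) * exp (b*y)" by simp
      also have "\<dots> = exp (b'*y)" by (simp add: exp_add[symmetric] algebra_simps)
      finally show ?thesis using assms by (simp add: field_simps)
    qed
    finally show ?thesis by simp
  next
    case False
    have "max (exp (t*y)) (exp (s*y)) \<le> 1"
      using assms False by (auto simp: mult_nonneg_nonpos)
    hence "\<bar>y\<bar> * max (exp (t*y)) (exp (s*y)) \<le> \<bar>y\<bar>" by (simp add: mult_left_le)
    thus ?thesis by (smt (verit) exp_gt_zero assms divide_pos_pos)
  qed
  have "\<bar>exp (t*y) - exp (s*y)\<bar> \<le> \<bar>t*y - s*y\<bar> * max (exp (t*y)) (exp (s*y))" by (rule gen)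
  also have "\<dots> = \<bar>t - s\<bar> * (\<bar>y\<bar> * max (exp (t*y)) (exp (s*y)))"
    by (simp add: left_diff_distrib[symmetric] abs_mult)
  also have "\<dots> \<le> \<bar>t - s\<bar> * (\<bar>y\<bar> + exp (b'*y) / (b' - b))" by (rule mult_left_mono[OF M]) simp
  finally show ?thesis .
qed

lemma wbound:
  fixes y s b b' :: real
  assumes "0 \<le> s" "s \<le> b" "b < b'"
  shows "\<bar>y * exp (s*y)\<bar> \<le> \<bar>y\<bar> + exp (b'*y) / (b' - b)"
proof (cases "y \<ge> 0")
  case True
  have "exp (s*y) \<le> exp (b*y)" using assms True by (auto intro: mult_right_mono)
  hence "\<bar>y * exp (s*y)\<bar> \<le> y * exp (b*y)" using True by (simp add: abs_mult mult_left_mono)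
  also have "y * exp (b*y) \<le> exp (b'*y) / (b' - b)"
  proof -
    have "(b'-b)*y \<le> exp ((b'-b)*y)" using exp_ge_add_one_self[of "(b'-b)*y"] by linarith
    hence "(b'-b)*y * exp (b*y) \<le> exp ((b'-b)*y) * exp (b*y)" by simp
    also have "\<dots> = exp (b'*y)" by (simp add: exp_add[symmetric] algebra_simps)
    finally show ?thesis using assms by (simp add: field_simps)
  qed
  finally show ?thesis by simp
next
  case False
  have "exp (s*y) \<le> 1" using assms False by (auto simp: mult_nonneg_nonpos)
  hence "\<bar>y * exp (s*y)\<bar> \<le> \<bar>y\<bar>" by (simp add: abs_mult mult_left_le)
  thus ?thesis by (smt (verit) exp_gt_zero assms divide_pos_pos)
qed

theorem mainTheorem5:
  fixes M :: "'a measure" and Y Ystar :: "'a \<Rightarrow> real" and c \<theta> :: real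
  assumes "prob_space M"
    and "Y \<in> borel_measurable M" and "Ystar \<in> borel_measurable M"
    and "integrable M Y" and "(\<integral>x. Y x \<partial>M) = 0"
    and "integrable M (\<lambda>x. (Y x)\<^sup>2)" and "(\<integral>x. (Y x)\<^sup>2 \<partial>M) > 0"
    and "zero_biased M Y Ystar"
    and "c > 0"
    and "AE x in M. \<bar>Ystar x - Y x\<bar> \<le> c"
    and "\<And>s. 0 \<le> s \<Longrightarrow> s < 2 / c \<Longrightarrow> integrable M (\<lambda>x. exp (s * Y x))"
    and "0 < \<theta>" and "\<theta> < 2 / c"
  shows "(\<integral>x. exp (\<theta> * Y x) \<partial>M)
           \<le> exp (5 * (\<integral>x. (Y x)\<^sup>2 \<partial>M) * \<theta>\<^sup>2 / (6 * (1 - c * \<theta> / 2)))"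
proof -
  note Ym[measurable] = assms(2) and Ysm[measurable] = assms(3)
  interpret prob_space M by (rule assms(1))
  define \<sigma>2 where "\<sigma>2 = (\<integral>x. (Y x)\<^sup>2 \<partial>M)"
  have \<sigma>pos: "\<sigma>2 > 0" using assms(7) by (simp add: \<sigma>2_def)
  define b' where "b' = (\<theta> + 2/c) / 2"
  have b': "\<theta> < b'" "b' < 2/c" using assms(13) by (auto simp: b'_def)
  define m where "m = (\<lambda>s. \<integral>x. exp (s * Y x) \<partial>M)"
  define D where "D = (\<lambda>s. \<integral>x. Y x * exp (s * Y x) \<partial>M)"
  define w where "w = (\<lambda>x. \<bar>Y x\<bar> + exp (b' * Y x) / (b' - \<theta>))"
  have ctheta: "c * \<theta> < 2" using assms(9,13) by (simp add: field_simps)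
  have intE: "integrable M (\<lambda>x. exp (s * Y x))" if "0 \<le> s" "s \<le> \<theta>" for s
    using assms(11) that assms(13) by auto
  have intw: "integrable M w"
    unfolding w_def using assms(4) assms(11)[of b'] b' assms(12)
    by (intro Bochner_Integration.integrable_add integrable_abs integrable_divide) auto
  have bnd: "\<bar>exp (t * Y x) - exp (s * Y x)\<bar> \<le> \<bar>t - s\<bar> * w x"
    if "0 \<le> s" "s \<le> \<theta>" "0 \<le> t" "t \<le> \<theta>" for s t x
    unfolding w_def by (rule key_bound) (use that b' in auto)
  have intD: "integrable M (\<lambda>x. Y x * exp (s * Y x))" if "0 \<le> s" "s \<le> \<theta>" for s
    by (rule Bochner_Integration.integrable_bound[OF intw]) 
       (use wbound[of s \<theta> b'] that b' in \<open>auto simp: w_def\<close>)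
  have m1: "m s \<ge> 1" if "0 \<le> s" "s \<le> \<theta>" for s
  proof -
    have "(\<integral>x. 1 + s * Y x \<partial>M) \<le> m s" unfolding m_def
      by (rule integral_mono) (use intE[OF that] assms(4) in \<open>auto intro: exp_ge_add_one_self\<close>)
    moreover have "(\<integral>x. 1 + s * Y x \<partial>M) = 1" using assms(4,5) prob_space by simp
    ultimately show ?thesis by simp
  qed
  have cont: "continuous_on {0..\<theta>} m"
  proof (rule lipschitz_on_continuous_on[where L="\<integral>x. w x \<partial>M"], rule lipschitz_onI)
    fix s t assume st: "s \<in> {0..\<theta>}" "t \<in> {0..\<theta>}"
    have "m s - m t = (\<integral>x. exp (s * Y x) - exp (t * Y x) \<partial>M)"
      unfolding m_def using st by (subst Bochner_Integration.integral_diff) (auto intro!: intE)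
    also have "\<bar>\<dots>\<bar> \<le> (\<integral>x. \<bar>exp (s * Y x) - exp (t * Y x)\<bar> \<partial>M)" by (rule integral_abs_bound)
    also have "\<dots> \<le> (\<integral>x. \<bar>s - t\<bar> * w x \<partial>M)"
      by (rule integral_mono) (use st bnd[of t s] intw intE in auto)
    also have "\<dots> = (\<integral>x. w x \<partial>M) * dist s t" by (simp add: dist_real_def)
    finally show "dist (m s) (m t) \<le> (\<integral>x. w x \<partial>M) * dist s t" by (simp add: dist_real_def)
  next
    show "0 \<le> (\<integral>x. w x \<partial>M)" unfolding w_def by (rule integral_nonneg_AE) (use b' in \<open>auto intro!: add_nonneg_nonneg\<close>)
  qed
  have deriv: "(m has_real_derivative D s0) (at s0)" if s0: "0 < s0" "s0 < \<theta>" for s0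
  proof -
    have "((\<lambda>s. (m s - m s0) / (s - s0)) \<longlongrightarrow> D s0) (at s0 within {0<..<\<theta>})"
      unfolding tendsto_at_iff_sequentially
    proof (intro allI impI)
      fix X :: "nat \<Rightarrow> real"
      assume X: "\<forall>i. X i \<in> {0<..<\<theta>} - {s0}" and Xl: "X \<longlonglongrightarrow> s0"
      have eq: "(m (X i) - m s0) / (X i - s0) =
          (\<integral>x. (exp (X i * Y x) - exp (s0 * Y x)) / (X i - s0) \<partial>M)" for i
        unfolding m_def using X s0
        by (subst integral_divide_zero, subst Bochner_Integration.integral_diff)
           (auto intro!: intE simp: less_imp_le)
      have "(\<lambda>i. \<integral>x. (exp (X i * Y x) - exp (s0 * Y x)) / (X i - s0) \<partial>M) \<longlonglongrightarrow> D s0"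
        unfolding D_def
      proof (rule integral_dominated_convergence[where w=w])
        show "integrable M w" by (rule intw)
        show "AE x in M. (\<lambda>i. (exp (X i * Y x) - exp (s0 * Y x)) / (X i - s0)) \<longlonglongrightarrow> Y x * exp (s0 * Y x)"
        proof (rule AE_I2)
          fix x
          have "((\<lambda>s. exp (s * Y x)) has_real_derivative (Y x * exp (s0 * Y x))) (at s0)"
            by (auto intro!: derivative_eq_intros simp: mult.commute)
          hence "((\<lambda>s. (exp (s * Y x) - exp (s0 * Y x)) / (s - s0)) \<longlongrightarrow> Y x * exp (s0 * Y x)) (at s0)"
            by (simp add: has_field_derivative_iff)
          hence "((\<lambda>s. (exp (s * Y x) - exp (s0 * Y x)) / (s - s0)) \<circ> X) \<longlonglongrightarrow> Y x * exp (s0 * Y x)"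
            using X Xl unfolding tendsto_at_iff_sequentially by auto
          thus "(\<lambda>i. (exp (X i * Y x) - exp (s0 * Y x)) / (X i - s0)) \<longlonglongrightarrow> Y x * exp (s0 * Y x)"
            by (simp add: comp_def)
        qed
        fix i
        show "AE x in M. norm ((exp (X i * Y x) - exp (s0 * Y x)) / (X i - s0)) \<le> w x"
        proof (rule AE_I2)
          fix x
          have ne: "X i \<noteq> s0" and Xi: "0 \<le> X i" "X i \<le> \<theta>" using X[rule_format, of i] by auto
          have "\<bar>exp (X i * Y x) - exp (s0 * Y x)\<bar> \<le> \<bar>X i - s0\<bar> * w x"
            by (rule bnd) (use Xi s0 in auto)
          thus "norm ((exp (X i * Y x) - exp (s0 * Y x)) / (X i - s0)) \<le> w x"
            using ne by (simp add: divide_le_eq abs_divide mult.commute)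
        qed
      qed auto
      thus "((\<lambda>s. (m s - m s0) / (s - s0)) \<circ> X) \<longlonglongrightarrow> D s0"
        by (simp add: comp_def eq)
    qed
    moreover have "at s0 within {0<..<\<theta>} = at s0" using s0 by (intro at_within_open) auto
    ultimately show ?thesis by (simp add: has_field_derivative_iff)
  qed
  define Es where "Es = (\<lambda>s. \<integral>x. exp (s * Ystar x) \<partial>M)"
  have Dbound: "D s \<le> \<sigma>2 * s * (m s * (1 + s * c / 2) / (1 - c * \<theta> / 2))"
    if s: "0 < s" "s < \<theta>" for s
  proof -
    have AEs: "AE x in M. s * Ystar x \<le> s * Y x + s * c"
      using assms(10)
    proof eventually_elim
      fix x assume "\<bar>Ystar x - Y x\<bar> \<le> c"
      hence "Ystar x \<le> Y x + c" by (simp add: abs_le_iff)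
      hence "s * Ystar x \<le> s * (Y x + c)" using s by (intro mult_left_mono) auto
      thus "s * Ystar x \<le> s * Y x + s * c" by (simp add: algebra_simps)
    qed
    have intS: "integrable M (\<lambda>x. exp (s * Ystar x))"
    proof (rule Bochner_Integration.integrable_bound[where f="\<lambda>x. exp (s * c) * exp (s * Y x)"])
      show "integrable M (\<lambda>x. exp (s * c) * exp (s * Y x))" using intE[of s] s by auto
      show "AE x in M. norm (exp (s * Ystar x)) \<le> norm (exp (s * c) * exp (s * Y x))"
        using AEs by eventually_elim (simp add: exp_add[symmetric] add.commute)
    qed auto
    have zb: "D s = \<sigma>2 * (s * Es s)"
    proof -
      have ac: "abs_cont_deriv (\<lambda>y. exp (s * y)) (\<lambda>y. s * exp (s * y))"
        unfolding abs_cont_deriv_def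
      proof (intro conjI allI impI)
        fix a b :: real
        show "set_integrable lborel {a..b} (\<lambda>y. s * exp (s * y))"
          by (rule borel_integrable_atLeastAtMost') (intro continuous_intros)
        assume "a \<le> b"
        have "(LINT x:{a..b}|lborel. s * exp (s * x)) = exp (s * b) - exp (s * a)"
          unfolding set_lebesgue_integral_def
        proof (rule integral_FTC_atLeastAtMost[OF \<open>a \<le> b\<close>])
          fix x
          have "((\<lambda>y. exp (s * y)) has_real_derivative s * exp (s * x)) (at x within {a..b})"
            by (auto intro!: derivative_eq_intros)
          thus "((\<lambda>y. exp (s * y)) has_vector_derivative s * exp (s * x)) (at x within {a..b})"
            by (simp add: has_real_derivative_iff_has_vector_derivative)
        qed (intro continuous_intros)
        thus "exp (s * b) - exp (s * a) = (LINT x:{a..b}|lborel. s * exp (s * x))" by simp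
      qed
      have "(\<integral>x. Y x * exp (s * Y x) \<partial>M) = (\<integral>x. (Y x)\<^sup>2 \<partial>M) * (\<integral>x. s * exp (s * Ystar x) \<partial>M)"
      proof -
        have "integrable M (\<lambda>x. s * exp (s * Ystar x))" using intS by auto
        from assms(8)[unfolded zero_biased_def, rule_format, OF ac _ this] intD[of s] s
        show ?thesis by simp
      qed
      thus ?thesis by (simp add: D_def \<sigma>2_def Es_def)
    qed
    have trapAE: "AE x in M. exp (s * Ystar x) * (1 - s * c / 2) \<le> exp (s * Y x) * (1 + s * c / 2)"
      using assms(10)
    proof eventually_elim
      fix x assume a: "\<bar>Ystar x - Y x\<bar> \<le> c"
      have d: "\<bar>s * Ystar x - s * Y x\<bar> \<le> s * c"
        using a s by (simp add: right_diff_distrib[symmetric] abs_mult mult_left_mono)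
      have "\<bar>exp (s * Ystar x) - exp (s * Y x)\<bar> \<le> \<bar>s * Ystar x - s * Y x\<bar> * (exp (s * Ystar x) + exp (s * Y x)) / 2"
        by (rule trap)
      also have "\<dots> \<le> s * c * (exp (s * Ystar x) + exp (s * Y x)) / 2"
        by (intro divide_right_mono mult_right_mono d) (auto intro: add_nonneg_nonneg)
      finally have "exp (s * Ystar x) - exp (s * Y x) \<le> s * c * (exp (s * Ystar x) + exp (s * Y x)) / 2"
        by linarith
      thus "exp (s * Ystar x) * (1 - s * c / 2) \<le> exp (s * Y x) * (1 + s * c / 2)"
        by (simp add: algebra_simps)
    qed
    have "Es s * (1 - s * c / 2) \<le> m s * (1 + s * c / 2)"
    proof -
      have "(\<integral>x. exp (s * Ystar x) * (1 - s * c / 2) \<partial>M) \<le> (\<integral>x. exp (s * Y x) * (1 + s * c / 2) \<partial>M)"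
        by (rule integral_mono_AE) (use trapAE intS intE[of s] s in auto)
      thus ?thesis by (simp add: Es_def m_def)
    qed
    moreover have "1 - c * \<theta> / 2 \<le> 1 - s * c / 2" using s assms(9) by (simp add: mult.commute mult_left_mono)
    moreover have "0 \<le> Es s" unfolding Es_def by (rule integral_nonneg_AE) auto
    moreover have pos: "0 < 1 - c * \<theta> / 2" using ctheta by simp
    ultimately have "Es s * (1 - c * \<theta> / 2) \<le> m s * (1 + s * c / 2)"
      by (smt (verit) mult_left_mono)
    hence "Es s \<le> m s * (1 + s * c / 2) / (1 - c * \<theta> / 2)" using pos by (simp add: field_simps)
    hence "\<sigma>2 * s * Es s \<le> \<sigma>2 * s * (m s * (1 + s * c / 2) / (1 - c * \<theta> / 2))"
      using \<sigma>pos s by (intro mult_left_mono) auto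
    thus ?thesis using zb by (simp add: mult.assoc)
  qed
  define K where "K = 1 - c * \<theta> / 2"
  have Kpos: "K > 0" using ctheta by (simp add: K_def)
  define h where "h = (\<lambda>s. ln (m s) - \<sigma>2 * (s ^ 2/2 + c * s ^ 3/6) / K)"
  have hcont: "continuous_on {0..\<theta>} h"
  proof -
    have "\<forall>s\<in>{0..\<theta>}. m s \<noteq> 0" using m1 by (metis atLeastAtMost_iff not_one_le_zero)
    thus ?thesis unfolding h_def using cont Kpos by (intro continuous_intros) auto
  qed
  have hder: "(h has_real_derivative (D s / m s - \<sigma>2 * (s + c * s ^ 2 / 2) / K)) (at s)"
    if "0 < s" "s < \<theta>" for s
  proof -
    have "m s > 0" using m1[of s] that by auto
    have e: "\<sigma>2 * ((2 * s) / 2 + c * (3 * s ^ 2) / 6) / K = \<sigma>2 * (s + c * s ^ 2 / 2) / K"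
      by simp
    have d1: "((\<lambda>s. ln (m s)) has_real_derivative D s / m s) (at s)"
      using DERIV_chain2[OF DERIV_ln_divide[OF \<open>m s > 0\<close>] deriv[OF that]] by simp
    have d2: "((\<lambda>s. \<sigma>2 * (s ^ 2/2 + c * s ^ 3/6) / K) has_real_derivative
                 \<sigma>2 * ((2 * s) / 2 + c * (3 * s ^ 2) / 6) / K) (at s)"
      using Kpos by (auto intro!: derivative_eq_intros)
    show ?thesis unfolding h_def using DERIV_diff[OF d1 d2] e by simp
  qed
  obtain l z where z: "0 < z" "z < \<theta>" "DERIV h z :> l" "h \<theta> - h 0 = (\<theta> - 0) * l"
    using MVT[OF assms(12) hcont] hder unfolding real_differentiable_def by blast
  have l: "l = D z / m z - \<sigma>2 * (z + c * z ^ 2 / 2) / K"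
    using DERIV_unique[OF z(3) hder[OF z(1,2)]] .
  have mz: "m z > 0" using m1[of z] z by auto
  have "D z / m z \<le> (\<sigma>2 * z * (m z * (1 + z * c / 2) / K)) / m z"
    using Dbound[OF z(1,2)] mz by (intro divide_right_mono) (auto simp: K_def)
  also have "\<dots> = \<sigma>2 * z * (1 + z * c / 2) / K" using mz by simp
  also have "\<dots> = \<sigma>2 * (z + c * z ^ 2 / 2) / K" by (simp add: algebra_simps power2_eq_square)
  finally have "l \<le> 0" using l by simp
  hence "\<theta> * l \<le> 0" using assms(12) by (intro mult_nonneg_nonpos) auto
  hence "h \<theta> \<le> h 0" using z(4) by simp
  moreover have "m 0 = 1" by (simp add: m_def prob_space)
  ultimately have lnb: "ln (m \<theta>) \<le> \<sigma>2 * (\<theta> ^ 2/2 + c * \<theta> ^ 3/6) / K" by (simp add: h_def)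
  have "\<sigma>2 * (\<theta> ^ 2/2 + c * \<theta> ^ 3/6) / K \<le> 5 * \<sigma>2 * \<theta> ^ 2 / (6 * K)"
  proof -
    have "\<theta> ^ 2/2 + c * \<theta> ^ 3/6 \<le> 5 * \<theta> ^ 2 / 6"
    proof -
      have "c * \<theta> ^ 3 = (c * \<theta>) * \<theta> ^ 2" by (simp add: power2_eq_square power3_eq_cube)
      also have "\<dots> \<le> 2 * \<theta> ^ 2" using ctheta by (intro mult_right_mono) auto
      finally show ?thesis by simp
    qed
    hence "\<sigma>2 * (\<theta> ^ 2/2 + c * \<theta> ^ 3/6) \<le> \<sigma>2 * (5 * \<theta> ^ 2 / 6)" using \<sigma>pos by (intro mult_left_mono) auto
    hence "\<sigma>2 * (\<theta> ^ 2/2 + c * \<theta> ^ 3/6) / K \<le> \<sigma>2 * (5 * \<theta> ^ 2 / 6) / K"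
      using Kpos by (intro divide_right_mono) auto
    thus ?thesis by simp
  qed
  with lnb have "ln (m \<theta>) \<le> 5 * \<sigma>2 * \<theta> ^ 2 / (6 * K)" by linarith
  hence "exp (ln (m \<theta>)) \<le> exp (5 * \<sigma>2 * \<theta> ^ 2 / (6 * K))" by simp
  moreover have "m \<theta> > 0" using m1[of \<theta>] assms(12) by auto
  ultimately have "m \<theta> \<le> exp (5 * \<sigma>2 * \<theta> ^ 2 / (6 * K))" by simp
  thus ?thesis by (simp only: m_def \<sigma>2_def K_def)
qed

end
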